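(* Let $\psi$ be a pure state of a finite-dimensional bipartite system $AB$ with Schmidt coefficients $\psi_j$ (i.e. $|\psi\rangle=\sum_j\psi_j|j\rangle|j\rangle$). Then $R_g(\psi)=R(\psi)=\left(\sum_j\psi_j\right)^2-1$.
   Context: For states $\rho,\sigma$ of $AB$, the robustness of $\rho$ relative to $\sigma$, $R(\rho\|\sigma)$, is the smallest non-negative $t$ such that $\rho+t\sigma$ (equivalently $\frac{1}{1+t}\rho+\frac{t}{1+t}\sigma$) is separable with respect to $A:B$, and $+\infty$ if no such $t$ exists. The robustness is $R(\rho)=\min\{R(\rho\|\sigma):\sigma\text{ a separable state of }AB\}$, and the global robustness is $R_g(\rho)=\min\{R(\rho\|\sigma):\sigma\text{ any density matrix of }AB\}$. A state is separable with respect to $A:B$ if it is a convex combination of product states $\rho^A\otimes\rho^B$. *)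

theory Defs
  imports Complex_Main "HOL-Library.Extended_Real"
begin

text \<open>Operators on a finite-dimensional Hilbert space with orthonormal basis indexed
  by a finite type 'i are represented by their matrices 'i \<Rightarrow> 'i \<Rightarrow> complex;
  kets by 'i \<Rightarrow> complex. System A has basis index type 'a, B has 'b, AB has 'a \<times> 'b.\<close>

type_synonym 'i op = "'i \<Rightarrow> 'i \<Rightarrow> complex"

definition hermitian :: "('i::finite) op \<Rightarrow> bool" where
  "hermitian M \<longleftrightarrow> (\<forall>i j. M i j = cnj (M j i))"

definition psd :: "('i::finite) op \<Rightarrow> bool" where
  "psd M \<longleftrightarrow> hermitian M \<and>
     (\<forall>v :: 'i \<Rightarrow> complex. 0 \<le> Re (\<Sum>i\<in>UNIV. \<Sum>j\<in>UNIV. cnj (v i) * M i j * v j))"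

definition trace :: "('i::finite) op \<Rightarrow> complex" where
  "trace M = (\<Sum>i\<in>UNIV. M i i)"

definition density :: "('i::finite) op \<Rightarrow> bool" where
  "density M \<longleftrightarrow> psd M \<and> trace M = 1"

definition tensor_op :: "('a::finite) op \<Rightarrow> ('b::finite) op \<Rightarrow> ('a \<times> 'b) op" where
  "tensor_op M N = (\<lambda>(a, b) (a', b'). M a a' * N b b')"

definition separable :: "(('a::finite) \<times> ('b::finite)) op \<Rightarrow> bool" where
  "separable \<rho> \<longleftrightarrow> (\<exists>(n::nat) (p::nat \<Rightarrow> real) (\<rho>A::nat \<Rightarrow> 'a op) (\<rho>B::nat \<Rightarrow> 'b op).
      (\<forall>k<n. 0 \<le> p k \<and> density (\<rho>A k) \<and> density (\<rho>B k)) \<and>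
      (\<Sum>k<n. p k) = 1 \<and>
      \<rho> = (\<lambda>i j. \<Sum>k<n. complex_of_real (p k) * tensor_op (\<rho>A k) (\<rho>B k) i j))"

text \<open>Robustness of \<rho> relative to \<sigma>: least t \<ge> 0 such that
  1/(1+t) \<rho> + t/(1+t) \<sigma> is separable (infimum; +\<infinity> if there is none).\<close>
definition rel_robustness :: "(('a::finite) \<times> ('b::finite)) op \<Rightarrow> ('a \<times> 'b) op \<Rightarrow> ereal" where
  "rel_robustness \<rho> \<sigma> = Inf {ereal t | t. 0 \<le> t \<and>
      separable (\<lambda>i j. complex_of_real (1 / (1 + t)) * \<rho> i j
                       + complex_of_real (t / (1 + t)) * \<sigma> i j)}"

definition robustness :: "(('a::finite) \<times> ('b::finite)) op \<Rightarrow> ereal" where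
  "robustness \<rho> = Inf {rel_robustness \<rho> \<sigma> | \<sigma>. density \<sigma> \<and> separable \<sigma>}"

definition global_robustness :: "(('a::finite) \<times> ('b::finite)) op \<Rightarrow> ereal" where
  "global_robustness \<rho> = Inf {rel_robustness \<rho> \<sigma> | \<sigma>. density \<sigma>}"

definition proj :: "('i::finite \<Rightarrow> complex) \<Rightarrow> 'i op" where
  "proj \<psi> = (\<lambda>i j. \<psi> i * cnj (\<psi> j))"

definition orthonormal_family :: "nat \<Rightarrow> (nat \<Rightarrow> ('i::finite) \<Rightarrow> complex) \<Rightarrow> bool" where
  "orthonormal_family n e \<longleftrightarrow>
     (\<forall>j<n. \<forall>k<n. (\<Sum>i\<in>UNIV. cnj (e j i) * e k i) = (if j = k then 1 else 0))"

end

theory Submission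
  imports Defs "HOL-Library.FuncSet"
begin

definition ip :: "('i::finite \<Rightarrow> complex) \<Rightarrow> ('i \<Rightarrow> complex) \<Rightarrow> complex" where
  "ip v w = (\<Sum>x\<in>UNIV. cnj (v x) * w x)"

definition bf :: "('i::finite) op \<Rightarrow> ('i \<Rightarrow> complex) \<Rightarrow> ('i \<Rightarrow> complex) \<Rightarrow> complex" where
  "bf M v w = (\<Sum>x\<in>UNIV. \<Sum>y\<in>UNIV. cnj (v x) * M x y * w y)"

lemma psd_bf: "psd M \<Longrightarrow> 0 \<le> Re (bf M v v)"
  by (simp add: psd_def bf_def)

lemma psd_herm: "psd M \<Longrightarrow> M i j = cnj (M j i)"
  unfolding psd_def hermitian_def by blast

lemma bf_cnj:
  assumes "hermitian M"
  shows "bf M w v = cnj (bf M v w)"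
proof -
  have "cnj (bf M v w) = (\<Sum>x\<in>UNIV. \<Sum>y\<in>UNIV. cnj (cnj (v x) * M x y * w y))"
    by (simp only: bf_def cnj_sum)
  also have "\<dots> = (\<Sum>x\<in>UNIV. \<Sum>y\<in>UNIV. cnj (w y) * M y x * v x)"
    using assms unfolding hermitian_def
    by (intro sum.cong refl) (metis complex_cnj_cnj complex_cnj_mult mult.commute mult.left_commute)
  also have "\<dots> = bf M w v"
    unfolding bf_def by (rule sum.swap)
  finally show ?thesis by simp
qed

lemma bf_real: "hermitian M \<Longrightarrow> Im (bf M v v) = 0"
proof -
  assume h: "hermitian M"
  have "bf M v v = cnj (bf M v v)" by (rule bf_cnj[OF h])
  then show ?thesis by (simp add: complex_eq_iff)
qed

lemma bf_expand:
  "bf M (\<lambda>x. a * v x + w x) (\<lambda>x. a * v x + w x) =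
     cnj a * a * bf M v v + cnj a * bf M v w + a * bf M w v + bf M w w"
  by (simp add: bf_def algebra_simps sum.distrib sum_distrib_left)

lemma bcb: "b * cnj b = of_real ((cmod b)^2)" "cnj b * b = of_real ((cmod b)^2)"
  using complex_norm_square[of b] by (simp_all add: mult.commute)

lemma quad_aux:
  fixes B p q :: real
  assumes "B \<ge> 0" "p \<ge> 0" "\<And>s. 0 \<le> s^2 * B * p - 2 * s * B + q"
  shows "B \<le> p * q"
proof (cases "p > 0")
  case True
  have "0 \<le> (1/p)^2 * B * p - 2 * (1/p) * B + q" by (rule assms(3))
  also have "\<dots> = q - B / p" using True by (simp add: field_simps power2_eq_square)
  finally show ?thesis using True by (simp add: field_simps)
next
  case False
  hence p0: "p = 0" using assms by simp
  show ?thesis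
  proof (rule ccontr)
    assume "\<not> B \<le> p * q"
    hence Bp: "B > 0" using p0 by simp
    have "0 \<le> ((q+1)/(2*B))^2 * B * p - 2 * ((q+1)/(2*B)) * B + q" by (rule assms(3))
    also have "\<dots> = -1" using p0 Bp by (simp add: field_simps)
    finally show False by simp
  qed
qed

lemma cs_e:
  fixes b :: complex and s :: real
  shows "cnj (- of_real s * b) * (- of_real s * b) = of_real (s^2 * (cmod b)^2)"
    and "cnj (- of_real s * b) * b = of_real (- s * (cmod b)^2)"
    and "(- of_real s * b) * cnj b = of_real (- s * (cmod b)^2)"
proof -
  have "cnj (- of_real s * b) * (- of_real s * b) = of_real (s^2) * (cnj b * b)" by (simp add: power2_eq_square algebra_simps)
  then show "cnj (- of_real s * b) * (- of_real s * b) = of_real (s^2 * (cmod b)^2)" by (simp only: bcb of_real_mult)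
  have "cnj (- of_real s * b) * b = - of_real s * (cnj b * b)" by (simp add: algebra_simps)
  then show "cnj (- of_real s * b) * b = of_real (- s * (cmod b)^2)" by (simp only: bcb of_real_mult) simp
  have "(- of_real s * b) * cnj b = - of_real s * (b * cnj b)" by (simp add: algebra_simps)
  then show "(- of_real s * b) * cnj b = of_real (- s * (cmod b)^2)" by (simp only: bcb of_real_mult) simp
qed

lemma cauchy_schwarz_bf:
  assumes "psd M"
  shows "cmod (bf M v w) ^ 2 \<le> Re (bf M v v) * Re (bf M w w)"
proof -
  obtain b where b: "b = bf M v w" by simp
  have h: "hermitian M" using assms by (simp add: psd_def)
  have wv: "bf M w v = cnj b" using bf_cnj[OF h, of v w] b by simp
  have "0 \<le> s^2 * (cmod b)^2 * Re (bf M v v) - 2 * s * (cmod b)^2 + Re (bf M w w)" for s :: real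
  proof -
    have "0 \<le> Re (bf M (\<lambda>x. (- of_real s * b) * v x + w x) (\<lambda>x. (- of_real s * b) * v x + w x))"
      by (rule psd_bf[OF assms])
    also have "\<dots> = Re (cnj (- of_real s * b) * (- of_real s * b) * bf M v v
        + cnj (- of_real s * b) * b + (- of_real s * b) * cnj b + bf M w w)"
      by (simp only: bf_expand wv b)
    also have "\<dots> = Re (of_real (s^2 * (cmod b)^2) * bf M v v
        + of_real (- s * (cmod b)^2) + of_real (- s * (cmod b)^2) + bf M w w)"
      by (simp only: cs_e)
    also have "\<dots> = s^2 * (cmod b)^2 * Re (bf M v v) - 2 * s * (cmod b)^2 + Re (bf M w w)"
      by simp
    finally show ?thesis .
  qed
  from quad_aux[OF _ psd_bf[OF assms] this] b show ?thesis by simp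
qed


lemma sum_UNIV_prod:
  "(\<Sum>x\<in>(UNIV::('a::finite \<times> 'b::finite) set). g x) = (\<Sum>a\<in>UNIV. \<Sum>b\<in>UNIV. g (a, b))"
  by (simp add: sum.cartesian_product)

definition uu :: "(nat \<Rightarrow> 'a::finite \<Rightarrow> complex) \<Rightarrow> (nat \<Rightarrow> 'b::finite \<Rightarrow> complex) \<Rightarrow> nat \<Rightarrow> nat \<Rightarrow> ('a \<times> 'b) \<Rightarrow> complex"
  where "uu e f j k = (\<lambda>(a, b). e j a * f k b)"

lemma uu_apply[simp]: "uu e f j k (a, b) = e j a * f k b"
  by (simp add: uu_def)

lemma ip_uu: "ip (uu e f j k) (uu e f j' k') = ip (e j) (e j') * ip (f k) (f k')"
proof -
  have "ip (uu e f j k) (uu e f j' k') = (\<Sum>a\<in>UNIV. \<Sum>b\<in>UNIV. (cnj (e j a) * e j' a) * (cnj (f k b) * f k' b))"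
    unfolding ip_def sum_UNIV_prod by (simp add: algebra_simps)
  also have "\<dots> = ip (e j) (e j') * ip (f k) (f k')"
    unfolding ip_def by (simp add: sum_product)
  finally show ?thesis .
qed

lemma bf_tensor:
  "bf (tensor_op X Y) (uu e f j k) (uu e f j' k') = bf X (e j) (e j') * bf Y (f k) (f k')"
proof -
  have "bf (tensor_op X Y) (uu e f j k) (uu e f j' k') =
     (\<Sum>a\<in>UNIV. \<Sum>b\<in>UNIV. \<Sum>a'\<in>UNIV. \<Sum>b'\<in>UNIV. (cnj (e j a) * X a a' * e j' a') * (cnj (f k b) * Y b b' * f k' b'))"
    unfolding bf_def sum_UNIV_prod by (simp add: tensor_op_def algebra_simps)
  also have "\<dots> = bf X (e j) (e j') * bf Y (f k) (f k')"
    unfolding bf_def by (simp add: sum_product)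
  finally show ?thesis .
qed

lemma amgm_aux:
  fixes x y A1 A2 B1 B2 :: real
  assumes "0 \<le> x" "0 \<le> y" "0 \<le> A1" "0 \<le> A2" "0 \<le> B1" "0 \<le> B2"
    "x^2 \<le> A1 * A2" "y^2 \<le> B1 * B2"
  shows "x * y \<le> (A1 * B2 + A2 * B1) / 2"
proof -
  have "(x*y)^2 \<le> (A1 * A2) * (B1 * B2)"
    using assms by (simp add: power_mult_distrib mult_mono)
  also have "\<dots> = (A1 * B2) * (A2 * B1)" by simp
  also have "\<dots> \<le> ((A1 * B2 + A2 * B1) / 2)^2"
    using sum_squares_ge_zero[of "A1*B2 - A2*B1" 0] by (simp add: power2_eq_square field_simps)
  finally have "(x*y)^2 \<le> ((A1 * B2 + A2 * B1) / 2)^2" .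
  then show ?thesis
    by (rule power2_le_imp_le) (use assms in simp)
qed

definition Lw :: "(nat \<Rightarrow> 'a::finite \<Rightarrow> complex) \<Rightarrow> (nat \<Rightarrow> 'b::finite \<Rightarrow> complex) \<Rightarrow> nat \<Rightarrow> ('a \<times> 'b) op \<Rightarrow> complex"
  where "Lw e f n M = (\<Sum>j<n. \<Sum>k<n. bf M (uu e f j k) (uu e f j k) - bf M (uu e f k k) (uu e f j j))"

lemma Lw_tensor_nonneg:
  assumes X: "psd X" and Y: "psd Y"
  shows "0 \<le> Re (Lw e f n (tensor_op X Y))"
proof -
  define A where "A j = Re (bf X (e j) (e j))" for j
  define B where "B j = Re (bf Y (f j) (f j))" for j
  have hX: "hermitian X" and hY: "hermitian Y" using X Y by (auto simp: psd_def)
  have XA: "bf X (e j) (e j) = of_real (A j)" for j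
    using bf_real[OF hX, of "e j"] unfolding A_def by (simp add: complex_eq_iff)
  have YB: "bf Y (f j) (f j) = of_real (B j)" for j
    using bf_real[OF hY, of "f j"] unfolding B_def by (simp add: complex_eq_iff)
  have A0: "0 \<le> A j" for j unfolding A_def by (rule psd_bf[OF X])
  have B0: "0 \<le> B j" for j unfolding B_def by (rule psd_bf[OF Y])
  have key: "Re (bf X (e k) (e j) * bf Y (f k) (f j)) \<le> (A j * B k + A k * B j) / 2" for j k
  proof -
    have "Re (bf X (e k) (e j) * bf Y (f k) (f j)) \<le> cmod (bf X (e k) (e j) * bf Y (f k) (f j))"
      by (rule complex_Re_le_cmod)
    also have "\<dots> = cmod (bf X (e k) (e j)) * cmod (bf Y (f k) (f j))" by (simp add: norm_mult)
    also have "\<dots> \<le> (A j * B k + A k * B j) / 2"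
    proof (rule amgm_aux)
      show "(cmod (bf X (e k) (e j)))\<^sup>2 \<le> A j * A k"
        using cauchy_schwarz_bf[OF X, of "e k" "e j"] unfolding A_def by (simp add: mult.commute)
      show "(cmod (bf Y (f k) (f j)))\<^sup>2 \<le> B j * B k"
        using cauchy_schwarz_bf[OF Y, of "f k" "f j"] unfolding B_def by (simp add: mult.commute)
    qed (auto simp: A0 B0)
    finally show ?thesis .
  qed
  have eqL: "Re (Lw e f n (tensor_op X Y)) = (\<Sum>j<n. \<Sum>k<n. A j * B k - Re (bf X (e k) (e j) * bf Y (f k) (f j)))"
    unfolding Lw_def bf_tensor by (simp add: XA YB)
  have "(\<Sum>j<n. \<Sum>k<n. A j * B k - (A j * B k + A k * B j) / 2) \<le> (\<Sum>j<n. \<Sum>k<n. A j * B k - Re (bf X (e k) (e j) * bf Y (f k) (f j)))"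
    by (intro sum_mono diff_left_mono key)
  moreover have "(\<Sum>j<n. \<Sum>k<n. A j * B k - (A j * B k + A k * B j) / 2) = 0"
  proof -
    have "(\<Sum>j<n. \<Sum>k<n. A j * B k - (A j * B k + A k * B j) / 2)
        = (\<Sum>j<n. \<Sum>k<n. A j * B k / 2 - A k * B j / 2)"
      by (intro sum.cong refl) (simp add: field_simps)
    also have "\<dots> = (\<Sum>j<n. \<Sum>k<n. A j * B k / 2) - (\<Sum>j<n. \<Sum>k<n. A k * B j / 2)"
      by (simp add: sum_subtractf)
    also have "(\<Sum>j<n. \<Sum>k<n. A k * B j / 2) = (\<Sum>j<n. \<Sum>k<n. A j * B k / 2)"
      by (rule sum.swap)
    finally show ?thesis by simp
  qed
  ultimately show ?thesis using eqL by simp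
qed


lemma bf_sum_op: "bf (\<lambda>x y. \<Sum>k\<in>K. a k * M k x y) v w = (\<Sum>k\<in>K. a k * bf (M k) v w)"
proof -
  have "bf (\<lambda>x y. \<Sum>k\<in>K. a k * M k x y) v w = (\<Sum>x\<in>UNIV. \<Sum>y\<in>UNIV. \<Sum>k\<in>K. a k * (cnj (v x) * M k x y * w y))"
    unfolding bf_def by (simp add: sum_distrib_left sum_distrib_right mult.commute mult.left_commute)
  also have "\<dots> = (\<Sum>x\<in>UNIV. \<Sum>k\<in>K. \<Sum>y\<in>UNIV. a k * (cnj (v x) * M k x y * w y))"
    by (rule sum.cong[OF refl], rule sum.swap)
  also have "\<dots> = (\<Sum>k\<in>K. \<Sum>x\<in>UNIV. \<Sum>y\<in>UNIV. a k * (cnj (v x) * M k x y * w y))"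
    by (rule sum.swap)
  also have "\<dots> = (\<Sum>k\<in>K. a k * bf (M k) v w)"
    unfolding bf_def by (simp add: sum_distrib_left)
  finally show ?thesis .
qed

lemma bf_lin2: "bf (\<lambda>x y. a * M x y + b * N x y) v w = a * bf M v w + b * bf N v w"
  unfolding bf_def by (simp add: algebra_simps sum.distrib sum_distrib_left)

lemma Lw_sum_op: "Lw e f n (\<lambda>x y. \<Sum>k\<in>K. a k * M k x y) = (\<Sum>k\<in>K. a k * Lw e f n (M k))"
proof -
  have "Lw e f n (\<lambda>x y. \<Sum>k\<in>K. a k * M k x y) =
     (\<Sum>j<n. \<Sum>l<n. \<Sum>k\<in>K. a k * (bf (M k) (uu e f j l) (uu e f j l) - bf (M k) (uu e f l l) (uu e f j j)))"
    unfolding Lw_def bf_sum_op by (simp add: sum_subtractf right_diff_distrib)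
  also have "\<dots> = (\<Sum>j<n. \<Sum>k\<in>K. \<Sum>l<n. a k * (bf (M k) (uu e f j l) (uu e f j l) - bf (M k) (uu e f l l) (uu e f j j)))"
    by (rule sum.cong[OF refl], rule sum.swap)
  also have "\<dots> = (\<Sum>k\<in>K. \<Sum>j<n. \<Sum>l<n. a k * (bf (M k) (uu e f j l) (uu e f j l) - bf (M k) (uu e f l l) (uu e f j j)))"
    by (rule sum.swap)
  also have "\<dots> = (\<Sum>k\<in>K. a k * Lw e f n (M k))"
    unfolding Lw_def by (simp add: sum_distrib_left)
  finally show ?thesis .
qed

lemma Lw_lin2: "Lw e f n (\<lambda>x y. a * M x y + b * N x y) = a * Lw e f n M + b * Lw e f n N"
  unfolding Lw_def bf_lin2 by (simp add: algebra_simps sum.distrib sum_distrib_left sum_subtractf)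

lemma Lw_separable:
  assumes "separable \<omega>"
  shows "0 \<le> Re (Lw e f n \<omega>)"
proof -
  obtain N :: nat and p \<rho>A \<rho>B where hh: "(\<forall>k<N. 0 \<le> p k \<and> density (\<rho>A k) \<and> density (\<rho>B k)) \<and>
      (\<Sum>k<N. p k) = 1 \<and>
      \<omega> = (\<lambda>i j. \<Sum>k<N. complex_of_real (p k) * tensor_op (\<rho>A k) (\<rho>B k) i j)"
    using assms unfolding separable_def by blast
  have h: "\<forall>k<N. 0 \<le> p k \<and> density (\<rho>A k) \<and> density (\<rho>B k)"
    and om: "\<omega> = (\<lambda>i j. \<Sum>k<N. complex_of_real (p k) * tensor_op (\<rho>A k) (\<rho>B k) i j)"
    using hh by simp_all
  have "Lw e f n \<omega> = (\<Sum>k<N. complex_of_real (p k) * Lw e f n (tensor_op (\<rho>A k) (\<rho>B k)))"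
    unfolding om by (rule Lw_sum_op)
  hence "Re (Lw e f n \<omega>) = (\<Sum>k<N. p k * Re (Lw e f n (tensor_op (\<rho>A k) (\<rho>B k))))"
    by simp
  also have "\<dots> \<ge> 0"
    using h by (intro sum_nonneg mult_nonneg_nonneg Lw_tensor_nonneg) (auto simp: density_def)
  finally show ?thesis by simp
qed


lemma trace_bessel:
  fixes g :: "'k \<Rightarrow> 'i::finite \<Rightarrow> complex"
  assumes fin: "finite I"
    and on: "\<And>i i'. i \<in> I \<Longrightarrow> i' \<in> I \<Longrightarrow> ip (g i) (g i') = (if i = i' then 1 else 0)"
    and ps: "psd \<sigma>"
  shows "Re (\<Sum>i\<in>I. bf \<sigma> (g i) (g i)) \<le> Re (trace \<sigma>)"
proof -
  define P where "P x y = (\<Sum>i\<in>I. g i x * cnj (g i y))" for x y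
  define Q where "Q x y = (if x = y then 1 else 0) - P x y" for x y
  have Pc: "cnj (P x y) = P y x" for x y
    by (simp add: P_def mult.commute)
  have PP: "(\<Sum>z\<in>UNIV. P x z * P z y) = P x y" for x y
  proof -
    have "(\<Sum>z\<in>UNIV. P x z * P z y) = (\<Sum>z\<in>UNIV. \<Sum>i\<in>I. \<Sum>i'\<in>I. g i x * cnj (g i' y) * (cnj (g i z) * g i' z))"
      unfolding P_def sum_product by (simp add: mult.commute mult.left_commute)
    also have "\<dots> = (\<Sum>i\<in>I. \<Sum>z\<in>UNIV. \<Sum>i'\<in>I. g i x * cnj (g i' y) * (cnj (g i z) * g i' z))"
      by (rule sum.swap)
    also have "\<dots> = (\<Sum>i\<in>I. \<Sum>i'\<in>I. \<Sum>z\<in>UNIV. g i x * cnj (g i' y) * (cnj (g i z) * g i' z))"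
      by (rule sum.cong[OF refl], rule sum.swap)
    also have "\<dots> = (\<Sum>i\<in>I. \<Sum>i'\<in>I. g i x * cnj (g i' y) * ip (g i) (g i'))"
      unfolding ip_def by (simp add: sum_distrib_left)
    also have "\<dots> = (\<Sum>i\<in>I. \<Sum>i'\<in>I. if i = i' then g i x * cnj (g i' y) else 0)"
      by (intro sum.cong refl) (simp add: on)
    also have "\<dots> = P x y"
      unfolding P_def using fin by simp
    finally show ?thesis .
  qed
  have QQ: "(\<Sum>z\<in>UNIV. Q x z * Q z y) = Q x y" for x y
  proof -
    have "(\<Sum>z\<in>UNIV. Q x z * Q z y) = (\<Sum>z\<in>UNIV. (if x = z then (if x = y then 1 else 0) else 0))
        - (\<Sum>z\<in>UNIV. (if x = z then P z y else 0)) - (\<Sum>z\<in>UNIV. (if z = y then P x z else 0))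
        + (\<Sum>z\<in>UNIV. P x z * P z y)"
    proof -
      have pt: "Q x z * Q z y = (if x = z then (if x = y then 1 else 0) else 0)
        - (if x = z then P z y else 0) - (if z = y then P x z else 0) + P x z * P z y" for z
        unfolding Q_def by (simp add: algebra_simps)
      show ?thesis unfolding pt by (simp add: sum.distrib sum_subtractf)
    qed
    also have "\<dots> = Q x y"
      unfolding PP by (simp add: Q_def)
    finally show ?thesis .
  qed
  have Qc: "cnj (Q x y) = Q y x" for x y
    by (simp add: Q_def Pc)
  have "(\<Sum>z\<in>UNIV. bf \<sigma> (\<lambda>x. Q x z) (\<lambda>x. Q x z)) = (\<Sum>z\<in>UNIV. \<Sum>x\<in>UNIV. \<Sum>y\<in>UNIV. \<sigma> x y * (Q y z * Q z x))"
    unfolding bf_def by (simp add: Qc mult.commute mult.left_commute)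
  also have "\<dots> = (\<Sum>x\<in>UNIV. \<Sum>z\<in>UNIV. \<Sum>y\<in>UNIV. \<sigma> x y * (Q y z * Q z x))"
    by (rule sum.swap)
  also have "\<dots> = (\<Sum>x\<in>UNIV. \<Sum>y\<in>UNIV. \<Sum>z\<in>UNIV. \<sigma> x y * (Q y z * Q z x))"
    by (rule sum.cong[OF refl], rule sum.swap)
  also have "\<dots> = (\<Sum>x\<in>UNIV. \<Sum>y\<in>UNIV. \<sigma> x y * Q y x)"
    by (simp add: sum_distrib_left[symmetric] QQ)
  also have "\<dots> = (\<Sum>x\<in>UNIV. \<Sum>y\<in>UNIV. (if y = x then \<sigma> x y else 0)) - (\<Sum>x\<in>UNIV. \<Sum>y\<in>UNIV. \<sigma> x y * P y x)"
  proof -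
    have pt: "\<sigma> x y * Q y x = (if y = x then \<sigma> x y else 0) - \<sigma> x y * P y x" for x y
      unfolding Q_def by (simp add: algebra_simps)
    show ?thesis unfolding pt by (simp add: sum_subtractf)
  qed
  also have "(\<Sum>x\<in>UNIV. \<Sum>y\<in>UNIV. (if y = x then \<sigma> x y else 0)) = trace \<sigma>"
    by (simp add: trace_def)
  also have "(\<Sum>x\<in>UNIV. \<Sum>y\<in>UNIV. \<sigma> x y * P y x) = (\<Sum>i\<in>I. bf \<sigma> (g i) (g i))"
  proof -
    have "(\<Sum>x\<in>UNIV. \<Sum>y\<in>UNIV. \<sigma> x y * P y x) = (\<Sum>x\<in>UNIV. \<Sum>y\<in>UNIV. \<Sum>i\<in>I. cnj (g i x) * \<sigma> x y * g i y)"
      unfolding P_def by (simp add: sum_distrib_left mult.commute mult.left_commute)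
    also have "\<dots> = (\<Sum>x\<in>UNIV. \<Sum>i\<in>I. \<Sum>y\<in>UNIV. cnj (g i x) * \<sigma> x y * g i y)"
      by (rule sum.cong[OF refl], rule sum.swap)
    also have "\<dots> = (\<Sum>i\<in>I. \<Sum>x\<in>UNIV. \<Sum>y\<in>UNIV. cnj (g i x) * \<sigma> x y * g i y)"
      by (rule sum.swap)
    finally show ?thesis unfolding bf_def .
  qed
  finally have eq: "(\<Sum>z\<in>UNIV. bf \<sigma> (\<lambda>x. Q x z) (\<lambda>x. Q x z)) = trace \<sigma> - (\<Sum>i\<in>I. bf \<sigma> (g i) (g i))" .
  have "0 \<le> (\<Sum>z\<in>UNIV. Re (bf \<sigma> (\<lambda>x. Q x z) (\<lambda>x. Q x z)))"
    by (intro sum_nonneg psd_bf[OF ps])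
  also have "\<dots> = Re (trace \<sigma>) - Re (\<Sum>i\<in>I. bf \<sigma> (g i) (g i))"
    using arg_cong[OF eq, of Re] by simp
  finally show ?thesis by simp
qed


lemma ip_sum_right: "ip g (\<lambda>x. \<Sum>i\<in>I. a i * h i x) = (\<Sum>i\<in>I. a i * ip g (h i))"
  unfolding ip_def by (simp add: sum_distrib_left mult.commute mult.left_commute) (rule sum.swap)

lemma ip_cnj: "ip w v = cnj (ip v w)"
  unfolding ip_def by (simp add: mult.commute)

lemma bf_proj: "bf (proj v) w1 w2 = ip w1 v * ip v w2"
  unfolding bf_def ip_def proj_def sum_product by (simp add: mult.commute mult.left_commute)

lemma bf_sum_both: "bf M (\<lambda>x. \<Sum>i\<in>I. g i x) (\<lambda>x. \<Sum>j\<in>J. h j x) = (\<Sum>i\<in>I. \<Sum>j\<in>J. bf M (g i) (h j))"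
proof -
  have "bf M (\<lambda>x. \<Sum>i\<in>I. g i x) (\<lambda>x. \<Sum>j\<in>J. h j x) =
      (\<Sum>x\<in>UNIV. \<Sum>y\<in>UNIV. \<Sum>j\<in>J. \<Sum>i\<in>I. cnj (g i x) * M x y * h j y)"
    unfolding bf_def by (simp add: sum_distrib_left sum_distrib_right cnj_sum)
  also have "\<dots> = (\<Sum>x\<in>UNIV. \<Sum>y\<in>UNIV. \<Sum>i\<in>I. \<Sum>j\<in>J. cnj (g i x) * M x y * h j y)"
    by (intro sum.cong refl, rule sum.swap)
  also have "\<dots> = (\<Sum>x\<in>UNIV. \<Sum>i\<in>I. \<Sum>y\<in>UNIV. \<Sum>j\<in>J. cnj (g i x) * M x y * h j y)"
    by (rule sum.cong[OF refl], rule sum.swap)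
  also have "\<dots> = (\<Sum>i\<in>I. \<Sum>x\<in>UNIV. \<Sum>y\<in>UNIV. \<Sum>j\<in>J. cnj (g i x) * M x y * h j y)"
    by (rule sum.swap)
  also have "\<dots> = (\<Sum>i\<in>I. \<Sum>x\<in>UNIV. \<Sum>j\<in>J. \<Sum>y\<in>UNIV. cnj (g i x) * M x y * h j y)"
    by (intro sum.cong refl, rule sum.swap)
  also have "\<dots> = (\<Sum>i\<in>I. \<Sum>j\<in>J. \<Sum>x\<in>UNIV. \<Sum>y\<in>UNIV. cnj (g i x) * M x y * h j y)"
    by (intro sum.cong refl, rule sum.swap)
  finally show ?thesis unfolding bf_def .
qed

locale schm =
  fixes e :: "nat \<Rightarrow> 'a::finite \<Rightarrow> complex" and f :: "nat \<Rightarrow> 'b::finite \<Rightarrow> complex"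
    and n :: nat and c :: "nat \<Rightarrow> real"
  assumes e_on: "orthonormal_family n e" and f_on: "orthonormal_family n f"
    and c_nonneg: "\<forall>j<n. 0 \<le> c j"
begin

definition psi :: "('a \<times> 'b) \<Rightarrow> complex" where
  "psi = (\<lambda>x. \<Sum>j<n. complex_of_real (c j) * uu e f j j x)"

definition T :: real where
  "T = (\<Sum>j<n. \<Sum>k<n. if j = k then 0 else c j * c k)"

lemma ipe: "j < n \<Longrightarrow> k < n \<Longrightarrow> ip (e j) (e k) = (if j = k then 1 else 0)"
  using e_on unfolding orthonormal_family_def ip_def by blast

lemma ipf: "j < n \<Longrightarrow> k < n \<Longrightarrow> ip (f j) (f k) = (if j = k then 1 else 0)"
  using f_on unfolding orthonormal_family_def ip_def by blast

lemma ipu: "j < n \<Longrightarrow> k < n \<Longrightarrow> j' < n \<Longrightarrow> k' < n \<Longrightarrow>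
    ip (uu e f j k) (uu e f j' k') = (if j = j' \<and> k = k' then 1 else 0)"
  by (simp add: ip_uu ipe ipf)

lemma ip_u_psi: "j < n \<Longrightarrow> k < n \<Longrightarrow> ip (uu e f j k) psi = (if j = k then complex_of_real (c j) else 0)"
proof -
  assume jk: "j < n" "k < n"
  have "ip (uu e f j k) psi = (\<Sum>l<n. complex_of_real (c l) * ip (uu e f j k) (uu e f l l))"
    unfolding psi_def by (rule ip_sum_right)
  also have "\<dots> = (\<Sum>l<n. if l = j then (if j = k then complex_of_real (c j) else 0) else 0)"
    using jk by (intro sum.cong refl) (auto simp: ipu)
  also have "\<dots> = (if j = k then complex_of_real (c j) else 0)"
    using jk by simp
  finally show ?thesis .
qed

lemma ip_psi_u: "j < n \<Longrightarrow> k < n \<Longrightarrow> ip psi (uu e f j k) = (if j = k then complex_of_real (c j) else 0)"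
  by (subst ip_cnj) (simp add: ip_u_psi)

lemma ip_psi_psi: "ip psi psi = (\<Sum>j<n. complex_of_real ((c j)^2))"
proof -
  have "ip psi psi = (\<Sum>j<n. complex_of_real (c j) * ip psi (uu e f j j))"
    by (subst (2) psi_def) (rule ip_sum_right)
  also have "\<dots> = (\<Sum>j<n. complex_of_real ((c j)^2))"
    by (intro sum.cong refl) (simp add: ip_psi_u power2_eq_square)
  finally show ?thesis .
qed

lemma Lw_proj_psi: "Lw e f n (proj psi) = - complex_of_real T"
proof -
  have "Lw e f n (proj psi) = (\<Sum>j<n. \<Sum>k<n. - complex_of_real (if j = k then 0 else c j * c k))"
    unfolding Lw_def bf_proj
    by (intro sum.cong refl) (auto simp: ip_psi_u ip_u_psi)
  also have "\<dots> = - complex_of_real T"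
    unfolding T_def by (simp add: sum_negf)
  finally show ?thesis .
qed

lemma Lw_density_le:
  assumes "density \<sigma>"
  shows "Re (Lw e f n \<sigma>) \<le> 1"
proof -
  have ps: "psd \<sigma>" and tr: "trace \<sigma> = 1" using assms by (auto simp: density_def)
  define Phi where "Phi = (\<lambda>x. \<Sum>j<n. uu e f j j x)"
  have A: "(\<Sum>j<n. \<Sum>k<n. bf \<sigma> (uu e f k k) (uu e f j j)) = bf \<sigma> Phi Phi"
    unfolding Phi_def bf_sum_both by (rule sum.swap)
  have B: "(\<Sum>j<n. \<Sum>k<n. bf \<sigma> (uu e f j k) (uu e f j k)) = (\<Sum>p\<in>{..<n}\<times>{..<n}. bf \<sigma> ((\<lambda>(j,k). uu e f j k) p) ((\<lambda>(j,k). uu e f j k) p))"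
    by (subst sum.cartesian_product) (auto intro!: sum.cong)
  have C: "Re (\<Sum>p\<in>{..<n}\<times>{..<n}. bf \<sigma> ((\<lambda>(j,k). uu e f j k) p) ((\<lambda>(j,k). uu e f j k) p)) \<le> Re (trace \<sigma>)"
    by (rule trace_bessel[OF _ _ ps]) (auto simp: ipu split: if_splits)
  have "Lw e f n \<sigma> = (\<Sum>j<n. \<Sum>k<n. bf \<sigma> (uu e f j k) (uu e f j k)) - (\<Sum>j<n. \<Sum>k<n. bf \<sigma> (uu e f k k) (uu e f j j))"
    unfolding Lw_def by (simp add: sum_subtractf)
  hence "Re (Lw e f n \<sigma>) = Re (\<Sum>j<n. \<Sum>k<n. bf \<sigma> (uu e f j k) (uu e f j k)) - Re (bf \<sigma> Phi Phi)"
    using A by simp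
  also have "\<dots> \<le> Re (trace \<sigma>) - 0"
    using C psd_bf[OF ps, of Phi] unfolding B by linarith
  finally show ?thesis using tr by simp
qed

lemma lower_bound:
  assumes dens: "density \<sigma>" and t0: "0 \<le> t"
    and sep: "separable (\<lambda>i j. complex_of_real (1 / (1 + t)) * proj psi i j
                       + complex_of_real (t / (1 + t)) * \<sigma> i j)"
  shows "T \<le> t"
proof -
  have "0 \<le> Re (Lw e f n (\<lambda>i j. complex_of_real (1 / (1 + t)) * proj psi i j
                       + complex_of_real (t / (1 + t)) * \<sigma> i j))"
    by (rule Lw_separable[OF sep])
  also have "\<dots> = (1 / (1 + t)) * (- T) + (t / (1 + t)) * Re (Lw e f n \<sigma>)"
    unfolding Lw_lin2 Lw_proj_psi by simp
  also have "\<dots> \<le> (1 / (1 + t)) * (- T) + (t / (1 + t)) * 1"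
    using Lw_density_le[OF dens] t0 by (intro add_left_mono mult_left_mono) auto
  also have "\<dots> = (t - T) / (1 + t)"
    by (simp add: diff_divide_distrib)
  finally have "0 \<le> (t - T) / (1 + t)" .
  then show ?thesis using t0 by (simp add: zero_le_divide_iff)
qed

end


definition GG :: "complex set" where "GG = {1, \<i>, -1, -\<i>}"

lemma GG_unit: "g \<in> GG \<Longrightarrow> cnj g * g = 1"
  by (auto simp: GG_def)

lemma GG_mult_i: "g \<in> GG \<Longrightarrow> \<i> * g \<in> GG"
  by (auto simp: GG_def)

lemma GG_mult_mi: "g \<in> GG \<Longrightarrow> - (\<i> * g) \<in> GG"
  by (auto simp: GG_def)

lemma card_GG: "card GG = 4"
  by (simp add: GG_def complex_eq_iff)

definition mult_l :: "nat \<Rightarrow> nat \<Rightarrow> nat \<Rightarrow> nat \<Rightarrow> nat \<Rightarrow> complex" where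
  "mult_l j j' k k' l = (if l = j then \<i> else 1) * (if l = j' then -\<i> else 1) * (if l = k then -\<i> else 1) * (if l = k' then \<i> else 1)"

lemma exists_l:
  assumes "\<not> ((j = k \<and> j' = k') \<or> (j = j' \<and> k = k'))"
  shows "\<exists>l\<in>{j, j', k, k'}. mult_l j j' k k' l \<noteq> 1"
  using assms unfolding mult_l_def
  by (cases "j = j'"; cases "j = k"; cases "j = k'"; cases "j' = k"; cases "j' = k'"; cases "k = k'") (auto simp: complex_eq_iff)


definition chi :: "(nat \<Rightarrow> complex) \<Rightarrow> nat \<Rightarrow> nat \<Rightarrow> nat \<Rightarrow> nat \<Rightarrow> complex" where
  "chi \<phi> j j' k k' = \<phi> j * cnj (\<phi> j') * cnj (\<phi> k) * \<phi> k'"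

lemma chi_upd: "chi (\<phi>(l := \<i> * \<phi> l)) j j' k k' = mult_l j j' k k' l * chi \<phi> j j' k k'"
  unfolding chi_def mult_l_def by (auto simp: algebra_simps)

lemma char_sum:
  assumes "j < n" "j' < n" "k < n" "k' < n"
  shows "(\<Sum>\<phi>\<in>PiE {..<n} (\<lambda>_. GG). chi \<phi> j j' k k') =
     (if (j = k \<and> j' = k') \<or> (j = j' \<and> k = k') then of_nat (4 ^ n) else 0)"
proof (cases "(j = k \<and> j' = k') \<or> (j = j' \<and> k = k')")
  case True
  have "chi \<phi> j j' k k' = 1" if "\<phi> \<in> PiE {..<n} (\<lambda>_. GG)" for \<phi>
  proof -
    have u: "l < n \<Longrightarrow> cnj (\<phi> l) * \<phi> l = 1" for l using that by (auto intro: GG_unit)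
    show ?thesis
    proof (cases "j = k \<and> j' = k'")
      case True
      hence "chi \<phi> j j' k k' = (cnj (\<phi> j) * \<phi> j) * (cnj (\<phi> j') * \<phi> j')"
        unfolding chi_def by (simp add: mult.commute mult.left_commute)
      then show ?thesis using u assms True by simp
    next
      case False
      hence "j = j' \<and> k = k'" using \<open>(j = k \<and> j' = k') \<or> (j = j' \<and> k = k')\<close> by blast
      hence "chi \<phi> j j' k k' = (cnj (\<phi> j) * \<phi> j) * (cnj (\<phi> k) * \<phi> k)"
        unfolding chi_def by (simp add: mult.commute mult.left_commute)
      then show ?thesis using u assms by simp
    qed
  qed
  hence "(\<Sum>\<phi>\<in>PiE {..<n} (\<lambda>_. GG). chi \<phi> j j' k k') = of_nat (card (PiE {..<n} (\<lambda>_. GG)))"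
    by simp
  also have "card (PiE {..<n} (\<lambda>_. GG)) = 4 ^ n"
    by (simp add: card_PiE card_GG)
  finally show ?thesis using True by simp
next
  case False
  obtain l where l: "l \<in> {j, j', k, k'}" "mult_l j j' k k' l \<noteq> 1"
    using exists_l[OF False] by blast
  have ln: "l < n" using l assms by auto
  let ?P = "PiE {..<n} (\<lambda>_. GG)"
  let ?h = "\<lambda>\<phi>. \<phi>(l := \<i> * \<phi> l)"
  let ?h' = "\<lambda>\<phi>. \<phi>(l := - \<i> * \<phi> l)"
  have "(\<Sum>\<phi>\<in>?P. chi (?h \<phi>) j j' k k') = (\<Sum>\<phi>\<in>?P. chi \<phi> j j' k k')"
  proof (rule sum.reindex_bij_witness[where i = ?h' and j = ?h])
    fix a assume "a \<in> ?P"
    show "?h' (?h a) = a" by (simp add: fun_eq_iff)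
    show "?h a \<in> ?P" using \<open>a \<in> ?P\<close> ln by (auto simp: PiE_iff extensional_def intro: GG_mult_i)
    show "?h (?h' a) = a" by (simp add: fun_eq_iff)
    show "?h' a \<in> ?P" using \<open>a \<in> ?P\<close> ln by (auto simp: PiE_iff extensional_def intro: GG_mult_mi)
    show "chi (?h a) j j' k k' = chi (?h a) j j' k k'" by simp
  qed
  hence "mult_l j j' k k' l * (\<Sum>\<phi>\<in>?P. chi \<phi> j j' k k') = (\<Sum>\<phi>\<in>?P. chi \<phi> j j' k k')"
    by (simp add: chi_upd sum_distrib_left)
  hence "(mult_l j j' k k' l - 1) * (\<Sum>\<phi>\<in>?P. chi \<phi> j j' k k') = 0"
    by (simp add: algebra_simps)
  hence "(\<Sum>\<phi>\<in>?P. chi \<phi> j j' k k') = 0" using l(2) by simp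
  then show ?thesis using False by simp
qed

lemma sum_if_const: "(\<Sum>x\<in>A. if P then g x else 0) = (if P then (\<Sum>x\<in>A. g x) else 0)"
  by simp

lemma pair_collapse:
  fixes F :: "nat \<Rightarrow> nat \<Rightarrow> nat \<Rightarrow> nat \<Rightarrow> complex"
  shows "(\<Sum>j<n. \<Sum>j'<n. \<Sum>k<n. \<Sum>k'<n. F j j' k k' * (if (j = k \<and> j' = k') \<or> (j = j' \<and> k = k') then N else 0))
    = N * ((\<Sum>j<n. \<Sum>j'<n. F j j' j j') + (\<Sum>j<n. \<Sum>k<n. F j j k k) - (\<Sum>j<n. F j j j j))"
proof -
  have pt: "F j j' k k' * (if (j = k \<and> j' = k') \<or> (j = j' \<and> k = k') then N else 0)
     = (if k' = j' then (if k = j then N * F j j' j j' else 0) else 0)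
     + (if k' = k then (if j' = j then N * F j j k k else 0) else 0)
     - (if k' = j then (if k = j then (if j' = j then N * F j j j j else 0) else 0) else 0)" for j j' k k'
    by auto
  show ?thesis
    unfolding pt by (simp add: sum.distrib sum_subtractf sum_distrib_left sum_if_const ring_distribs)
qed

lemma density_proj:
  assumes "ip v v = 1"
  shows "density (proj v)"
proof -
  have h: "hermitian (proj v)" by (simp add: hermitian_def proj_def mult.commute)
  have "0 \<le> Re (bf (proj v) w w)" for w
  proof -
    have "bf (proj v) w w = cnj (ip v w) * ip v w"
      by (simp add: bf_proj ip_cnj[of w v])
    also have "\<dots> = of_real ((cmod (ip v w))^2)" by (rule bcb)
    finally show ?thesis by simp
  qed
  hence "psd (proj v)" using h unfolding psd_def bf_def by blast
  moreover have "trace (proj v) = 1"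
    using assms unfolding trace_def proj_def ip_def by (simp add: mult.commute)
  ultimately show ?thesis by (simp add: density_def)
qed

lemma separable_finite:
  fixes A :: "'k \<Rightarrow> ('a::finite) op" and B :: "'k \<Rightarrow> ('b::finite) op"
  assumes fin: "finite I" and h: "\<forall>i\<in>I. 0 \<le> p i \<and> density (A i) \<and> density (B i)"
    and s1: "(\<Sum>i\<in>I. p i) = 1"
  shows "separable (\<lambda>x y. \<Sum>i\<in>I. complex_of_real (p i) * tensor_op (A i) (B i) x y)"
proof -
  obtain g where g: "bij_betw g {..<card I} I"
    using ex_bij_betw_nat_finite[OF fin] by (auto simp: atLeast0LessThan)
  have gi: "k < card I \<Longrightarrow> g k \<in> I" for k using g by (auto simp: bij_betw_def)
  show ?thesis
    unfolding separable_def
  proof (intro exI conjI)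
    show "\<forall>k<card I. 0 \<le> (p \<circ> g) k \<and> density ((A \<circ> g) k) \<and> density ((B \<circ> g) k)"
      using h gi by auto
    show "(\<Sum>k<card I. (p \<circ> g) k) = 1"
      using sum.reindex_bij_betw[OF g, of p] s1 by simp
    show "(\<lambda>x y. \<Sum>i\<in>I. complex_of_real (p i) * tensor_op (A i) (B i) x y) =
      (\<lambda>x y. \<Sum>k<card I. complex_of_real ((p \<circ> g) k) * tensor_op ((A \<circ> g) k) ((B \<circ> g) k) x y)"
      using sum.reindex_bij_betw[OF g, of "\<lambda>i. complex_of_real (p i) * tensor_op (A i) (B i) _ _"]
      by (simp add: fun_eq_iff)
  qed
qed


locale schm2 = schm +
  assumes csq: "(\<Sum>j<n. (c j)^2) = 1"
begin

definition S :: real where "S = (\<Sum>j<n. c j)"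
definition rr :: "nat \<Rightarrow> real" where "rr j = sqrt (c j / S)"
definition av :: "(nat \<Rightarrow> complex) \<Rightarrow> 'a \<Rightarrow> complex" where
  "av \<phi> = (\<lambda>x. \<Sum>j<n. complex_of_real (rr j) * \<phi> j * e j x)"
definition bv :: "(nat \<Rightarrow> complex) \<Rightarrow> 'b \<Rightarrow> complex" where
  "bv \<phi> = (\<lambda>y. \<Sum>j<n. complex_of_real (rr j) * cnj (\<phi> j) * f j y)"
definition wD :: "nat \<times> nat \<Rightarrow> real" where
  "wD p = (if fst p = snd p then 0 else c (fst p) * c (snd p))"
definition DD :: "('a \<times> 'b) op" where
  "DD = (\<lambda>p q. \<Sum>jk\<in>{..<n}\<times>{..<n}. complex_of_real (wD jk) * tensor_op (proj (e (fst jk))) (proj (f (snd jk))) p q)"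

lemma T_nonneg: "0 \<le> T"
  unfolding T_def using c_nonneg by (auto intro!: sum_nonneg)

lemma S2: "S^2 = 1 + T"
proof -
  have "S^2 = (\<Sum>j<n. \<Sum>k<n. c j * c k)"
    unfolding S_def power2_eq_square sum_product ..
  also have "\<dots> = (\<Sum>j<n. \<Sum>k<n. (if j = k then 0 else c j * c k) + (if j = k then c j * c k else 0))"
    by (intro sum.cong refl) auto
  also have "\<dots> = T + (\<Sum>j<n. (c j)^2)"
    unfolding T_def by (simp add: sum.distrib power2_eq_square)
  finally show ?thesis using csq by simp
qed

lemma S_pos: "0 < S"
proof -
  have "0 \<le> S" unfolding S_def using c_nonneg by (auto intro!: sum_nonneg)
  moreover have "S \<noteq> 0" using S2 T_nonneg by (auto)
  ultimately show ?thesis by simp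
qed

lemma rr_sq: "j < n \<Longrightarrow> rr j * rr j = c j / S"
  unfolding rr_def using c_nonneg S_pos by simp

lemma ip_e_av: "j < n \<Longrightarrow> ip (e j) (av \<phi>) = complex_of_real (rr j) * \<phi> j"
proof -
  assume j: "j < n"
  have "ip (e j) (av \<phi>) = (\<Sum>l<n. complex_of_real (rr l) * \<phi> l * ip (e j) (e l))"
    unfolding av_def by (rule ip_sum_right)
  also have "\<dots> = (\<Sum>l<n. if l = j then complex_of_real (rr j) * \<phi> j else 0)"
    using j by (intro sum.cong refl) (auto simp: ipe)
  finally show ?thesis using j by simp
qed

lemma ip_f_bv: "j < n \<Longrightarrow> ip (f j) (bv \<phi>) = complex_of_real (rr j) * cnj (\<phi> j)"
proof -
  assume j: "j < n"
  have "ip (f j) (bv \<phi>) = (\<Sum>l<n. complex_of_real (rr l) * cnj (\<phi> l) * ip (f j) (f l))"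
    unfolding bv_def by (rule ip_sum_right)
  also have "\<dots> = (\<Sum>l<n. if l = j then complex_of_real (rr j) * cnj (\<phi> j) else 0)"
    using j by (intro sum.cong refl) (auto simp: ipf)
  finally show ?thesis using j by simp
qed

lemma sum_c_S: "(\<Sum>j<n. complex_of_real (c j / S)) = 1"
proof -
  have "(\<Sum>j<n. c j / S) = 1" using S_pos unfolding S_def[symmetric] sum_divide_distrib[symmetric] by simp
  then show ?thesis by (metis of_real_1 of_real_sum)
qed

lemma ip_av: "\<phi> \<in> PiE {..<n} (\<lambda>_. GG) \<Longrightarrow> ip (av \<phi>) (av \<phi>) = 1"
proof -
  assume ph: "\<phi> \<in> PiE {..<n} (\<lambda>_. GG)"
  have "ip (av \<phi>) (av \<phi>) = (\<Sum>j<n. complex_of_real (rr j) * \<phi> j * ip (av \<phi>) (e j))"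
    by (subst (2) av_def) (rule ip_sum_right)
  also have "\<dots> = (\<Sum>j<n. complex_of_real (c j / S))"
  proof (intro sum.cong refl)
    fix j assume "j \<in> {..<n}"
    hence j: "j < n" by simp
    have u: "cnj (\<phi> j) * \<phi> j = 1" using ph j by (auto intro: GG_unit)
    have "complex_of_real (rr j) * \<phi> j * ip (av \<phi>) (e j) = complex_of_real (rr j * rr j) * (cnj (\<phi> j) * \<phi> j)"
      by (subst ip_cnj) (simp add: ip_e_av j mult.commute mult.left_commute)
    also have "\<dots> = complex_of_real (c j / S)" using u rr_sq[OF j] by simp
    finally show "complex_of_real (rr j) * \<phi> j * ip (av \<phi>) (e j) = complex_of_real (c j / S)" .
  qed
  finally show ?thesis using sum_c_S by simp
qed

lemma ip_bv: "\<phi> \<in> PiE {..<n} (\<lambda>_. GG) \<Longrightarrow> ip (bv \<phi>) (bv \<phi>) = 1"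
proof -
  assume ph: "\<phi> \<in> PiE {..<n} (\<lambda>_. GG)"
  have "ip (bv \<phi>) (bv \<phi>) = (\<Sum>j<n. complex_of_real (rr j) * cnj (\<phi> j) * ip (bv \<phi>) (f j))"
    by (subst (2) bv_def) (rule ip_sum_right)
  also have "\<dots> = (\<Sum>j<n. complex_of_real (c j / S))"
  proof (intro sum.cong refl)
    fix j assume "j \<in> {..<n}"
    hence j: "j < n" by simp
    have u: "cnj (\<phi> j) * \<phi> j = 1" using ph j by (auto intro: GG_unit)
    have "complex_of_real (rr j) * cnj (\<phi> j) * ip (bv \<phi>) (f j) = complex_of_real (rr j * rr j) * (cnj (\<phi> j) * \<phi> j)"
      by (subst ip_cnj) (simp add: ip_f_bv j mult.commute mult.left_commute)
    also have "\<dots> = complex_of_real (c j / S)" using u rr_sq[OF j] by simp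
    finally show "complex_of_real (rr j) * cnj (\<phi> j) * ip (bv \<phi>) (f j) = complex_of_real (c j / S)" .
  qed
  finally show ?thesis using sum_c_S by simp
qed

end


context schm2
begin

lemma expand4:
  "tensor_op (proj (av \<phi>)) (proj (bv \<phi>)) (x, y) (x', y') =
    (\<Sum>j<n. \<Sum>j'<n. \<Sum>k<n. \<Sum>k'<n.
       (complex_of_real (rr j * rr j' * rr k * rr k') * (e j x * cnj (e j' x') * f k y * cnj (f k' y')))
       * chi \<phi> j j' k k')"
proof -
  have A: "av \<phi> x * cnj (av \<phi> x') = (\<Sum>j<n. \<Sum>j'<n. (complex_of_real (rr j) * \<phi> j * e j x) * cnj (complex_of_real (rr j') * \<phi> j' * e j' x'))"
    unfolding av_def cnj_sum sum_product ..
  have B: "bv \<phi> y * cnj (bv \<phi> y') = (\<Sum>k<n. \<Sum>k'<n. (complex_of_real (rr k) * cnj (\<phi> k) * f k y) * cnj (complex_of_real (rr k') * cnj (\<phi> k') * f k' y'))"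
    unfolding bv_def cnj_sum sum_product ..
  have "tensor_op (proj (av \<phi>)) (proj (bv \<phi>)) (x, y) (x', y') = (av \<phi> x * cnj (av \<phi> x')) * (bv \<phi> y * cnj (bv \<phi> y'))"
    by (simp add: tensor_op_def proj_def)
  also have "\<dots> = (\<Sum>j<n. \<Sum>j'<n. \<Sum>k<n. \<Sum>k'<n.
      ((complex_of_real (rr j) * \<phi> j * e j x) * cnj (complex_of_real (rr j') * \<phi> j' * e j' x')) *
      ((complex_of_real (rr k) * cnj (\<phi> k) * f k y) * cnj (complex_of_real (rr k') * cnj (\<phi> k') * f k' y')))"
    by (simp only: A B sum_distrib_right) (simp only: sum_distrib_left)
  also have "\<dots> = (\<Sum>j<n. \<Sum>j'<n. \<Sum>k<n. \<Sum>k'<n.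
       (complex_of_real (rr j * rr j' * rr k * rr k') * (e j x * cnj (e j' x') * f k y * cnj (f k' y')))
       * chi \<phi> j j' k k')"
    by (intro sum.cong refl) (simp add: chi_def mult.commute mult.left_commute)
  finally show ?thesis .
qed

lemma swap4:
  fixes F :: "nat \<Rightarrow> nat \<Rightarrow> nat \<Rightarrow> nat \<Rightarrow> complex" and X :: "'z \<Rightarrow> nat \<Rightarrow> nat \<Rightarrow> nat \<Rightarrow> nat \<Rightarrow> complex"
  shows "(\<Sum>\<phi>\<in>P. a * (\<Sum>j<n. \<Sum>j'<n. \<Sum>k<n. \<Sum>k'<n. F j j' k k' * X \<phi> j j' k k'))
     = a * (\<Sum>j<n. \<Sum>j'<n. \<Sum>k<n. \<Sum>k'<n. F j j' k k' * (\<Sum>\<phi>\<in>P. X \<phi> j j' k k'))"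
proof -
  have "(\<Sum>\<phi>\<in>P. (\<Sum>j<n. \<Sum>j'<n. \<Sum>k<n. \<Sum>k'<n. F j j' k k' * X \<phi> j j' k k'))
     = (\<Sum>j<n. \<Sum>\<phi>\<in>P. (\<Sum>j'<n. \<Sum>k<n. \<Sum>k'<n. F j j' k k' * X \<phi> j j' k k'))"
    by (rule sum.swap)
  also have "\<dots> = (\<Sum>j<n. \<Sum>j'<n. \<Sum>\<phi>\<in>P. (\<Sum>k<n. \<Sum>k'<n. F j j' k k' * X \<phi> j j' k k'))"
    by (intro sum.cong refl, rule sum.swap)
  also have "\<dots> = (\<Sum>j<n. \<Sum>j'<n. \<Sum>k<n. \<Sum>\<phi>\<in>P. (\<Sum>k'<n. F j j' k k' * X \<phi> j j' k k'))"
    by (intro sum.cong refl, rule sum.swap)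
  also have "\<dots> = (\<Sum>j<n. \<Sum>j'<n. \<Sum>k<n. \<Sum>k'<n. \<Sum>\<phi>\<in>P. F j j' k k' * X \<phi> j j' k k')"
    by (intro sum.cong refl, rule sum.swap)
  also have "\<dots> = (\<Sum>j<n. \<Sum>j'<n. \<Sum>k<n. \<Sum>k'<n. F j j' k k' * (\<Sum>\<phi>\<in>P. X \<phi> j j' k k'))"
    by (simp add: sum_distrib_left)
  finally show ?thesis by (simp add: sum_distrib_left[symmetric])
qed

lemma rr4: "j < n \<Longrightarrow> k < n \<Longrightarrow> rr j * rr k * rr j * rr k = c j * c k / S^2"
  using rr_sq[of j] rr_sq[of k] by (simp add: power2_eq_square mult.commute mult.left_commute)

lemma rr4': "j < n \<Longrightarrow> k < n \<Longrightarrow> rr j * rr j * rr k * rr k = c j * c k / S^2"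
  using rr_sq[of j] rr_sq[of k] by (simp add: power2_eq_square mult.commute mult.left_commute)

lemma mixture:
  "(\<Sum>\<phi>\<in>PiE {..<n} (\<lambda>_. GG). complex_of_real (1 / 4 ^ n) * tensor_op (proj (av \<phi>)) (proj (bv \<phi>)) (x, y) (x', y'))
   = complex_of_real (1 / S^2) * (proj psi (x, y) (x', y') + DD (x, y) (x', y'))"
proof -
  define F where "F j j' k k' = complex_of_real (rr j * rr j' * rr k * rr k') * (e j x * cnj (e j' x') * f k y * cnj (f k' y'))" for j j' k k'
  let ?P = "PiE {..<n} (\<lambda>_. GG)"
  let ?N = "of_nat (4 ^ n) :: complex"
  have "(\<Sum>\<phi>\<in>?P. complex_of_real (1 / 4 ^ n) * tensor_op (proj (av \<phi>)) (proj (bv \<phi>)) (x, y) (x', y'))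
     = (\<Sum>\<phi>\<in>?P. complex_of_real (1 / 4 ^ n) * (\<Sum>j<n. \<Sum>j'<n. \<Sum>k<n. \<Sum>k'<n. F j j' k k' * chi \<phi> j j' k k'))"
    unfolding expand4 F_def ..
  also have "\<dots> = complex_of_real (1 / 4 ^ n) * (\<Sum>j<n. \<Sum>j'<n. \<Sum>k<n. \<Sum>k'<n. F j j' k k' * (\<Sum>\<phi>\<in>?P. chi \<phi> j j' k k'))"
    by (rule swap4)
  also have "\<dots> = complex_of_real (1 / 4 ^ n) * (\<Sum>j<n. \<Sum>j'<n. \<Sum>k<n. \<Sum>k'<n. F j j' k k' *
      (if (j = k \<and> j' = k') \<or> (j = j' \<and> k = k') then ?N else 0))"
    by (intro arg_cong[where f = "\<lambda>z. _ * z"] sum.cong refl) (simp add: char_sum)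
  also have "\<dots> = complex_of_real (1 / 4 ^ n) * ?N * ((\<Sum>j<n. \<Sum>j'<n. F j j' j j') + (\<Sum>j<n. \<Sum>k<n. F j j k k) - (\<Sum>j<n. F j j j j))"
    unfolding pair_collapse by simp
  also have "complex_of_real (1 / 4 ^ n) * ?N = 1"
    by (simp add: field_simps)
  finally have L: "(\<Sum>\<phi>\<in>?P. complex_of_real (1 / 4 ^ n) * tensor_op (proj (av \<phi>)) (proj (bv \<phi>)) (x, y) (x', y'))
     = (\<Sum>j<n. \<Sum>j'<n. F j j' j j') + ((\<Sum>j<n. \<Sum>k<n. F j j k k) - (\<Sum>j<n. F j j j j))" by simp
  have R1: "(\<Sum>j<n. \<Sum>j'<n. F j j' j j') = complex_of_real (1 / S^2) * proj psi (x, y) (x', y')"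
  proof -
    have "proj psi (x, y) (x', y') = (\<Sum>j<n. \<Sum>j'<n. (complex_of_real (c j) * (e j x * f j y)) * cnj (complex_of_real (c j') * (e j' x' * f j' y')))"
      unfolding proj_def psi_def by (simp add: cnj_sum sum_product)
    hence "complex_of_real (1 / S^2) * proj psi (x, y) (x', y') = (\<Sum>j<n. \<Sum>j'<n. complex_of_real (1 / S^2) * ((complex_of_real (c j) * (e j x * f j y)) * cnj (complex_of_real (c j') * (e j' x' * f j' y'))))"
      by (simp add: sum_distrib_left)
    also have "\<dots> = (\<Sum>j<n. \<Sum>j'<n. F j j' j j')"
    proof (intro sum.cong refl)
      fix j j' assume "j \<in> {..<n}" "j' \<in> {..<n}"
      hence jj: "j < n" "j' < n" by auto
      have "F j j' j j' = complex_of_real (c j * c j' / S^2) * (e j x * cnj (e j' x') * f j y * cnj (f j' y'))"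
        by (simp only: F_def rr4[OF jj])
      then show "complex_of_real (1 / S^2) * ((complex_of_real (c j) * (e j x * f j y)) * cnj (complex_of_real (c j') * (e j' x' * f j' y'))) = F j j' j j'"
        by (simp add: mult.commute mult.left_commute)
    qed
    finally show ?thesis by simp
  qed
  have R2: "(\<Sum>j<n. \<Sum>k<n. F j j k k) - (\<Sum>j<n. F j j j j) = complex_of_real (1 / S^2) * DD (x, y) (x', y')"
  proof -
    have "DD (x, y) (x', y') = (\<Sum>j<n. \<Sum>k<n. complex_of_real (wD (j, k)) * ((e j x * cnj (e j x')) * (f k y * cnj (f k y'))))"
      unfolding DD_def by (subst sum.cartesian_product) (auto intro!: sum.cong simp: tensor_op_def proj_def)
    hence "complex_of_real (1 / S^2) * DD (x, y) (x', y') = (\<Sum>j<n. \<Sum>k<n. F j j k k - (if k = j then F j j j j else 0))"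
    proof -
      have pt: "complex_of_real (1 / S^2) * (complex_of_real (wD (j, k)) * ((e j x * cnj (e j x')) * (f k y * cnj (f k y'))))
          = F j j k k - (if k = j then F j j j j else 0)" if jk: "j < n" "k < n" for j k
      proof -
        have "F j j k k = complex_of_real (c j * c k / S^2) * (e j x * cnj (e j x') * f k y * cnj (f k y'))"
          by (simp only: F_def rr4'[OF jk])
        then show ?thesis by (cases "j = k") (simp_all add: wD_def mult.commute mult.left_commute)
      qed
      show ?thesis unfolding \<open>DD (x, y) (x', y') = _\<close> sum_distrib_left
        by (intro sum.cong refl) (rule pt; simp)
    qed
    also have "\<dots> = (\<Sum>j<n. \<Sum>k<n. F j j k k) - (\<Sum>j<n. F j j j j)"
      by (simp add: sum_subtractf)
    finally show ?thesis by (rule sym)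
  qed
  show ?thesis by (simp only: L R1 R2 distrib_left)
qed

end


lemma psd_comb:
  assumes fin: "finite I" and q: "\<forall>i\<in>I. 0 \<le> q i" and ps: "\<forall>i\<in>I. psd (M i)"
  shows "psd (\<lambda>x y. \<Sum>i\<in>I. complex_of_real (q i) * M i x y)"
proof -
  have "hermitian (\<lambda>x y. \<Sum>i\<in>I. complex_of_real (q i) * M i x y)"
    unfolding hermitian_def
  proof (intro allI)
    fix x y
    have "(\<Sum>i\<in>I. complex_of_real (q i) * M i x y) = (\<Sum>i\<in>I. cnj (complex_of_real (q i) * M i y x))"
    proof (intro sum.cong refl)
      fix i assume "i \<in> I"
      then show "complex_of_real (q i) * M i x y = cnj (complex_of_real (q i) * M i y x)"
        using psd_herm[of "M i" x y] ps by simp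
    qed
    then show "(\<Sum>i\<in>I. complex_of_real (q i) * M i x y) = cnj (\<Sum>i\<in>I. complex_of_real (q i) * M i y x)"
      by (simp only: cnj_sum)
  qed
  moreover have "0 \<le> Re (bf (\<lambda>x y. \<Sum>i\<in>I. complex_of_real (q i) * M i x y) v v)" for v
    unfolding bf_sum_op using q ps by (auto simp: Re_sum intro!: sum_nonneg mult_nonneg_nonneg psd_bf)
  ultimately show ?thesis unfolding psd_def bf_def by blast
qed

lemma trace_comb: "trace (\<lambda>x y. \<Sum>i\<in>I. a i * M i x y) = (\<Sum>i\<in>I. a i * trace (M i))"
  unfolding trace_def by (simp add: sum_distrib_left) (rule sum.swap)

lemma tensor_proj: "tensor_op (proj a) (proj b) = proj (uu (\<lambda>_. a) (\<lambda>_. b) 0 0)"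
  by (auto simp: fun_eq_iff tensor_op_def proj_def uu_def)

context schm2
begin

definition M0 :: "('a \<times> 'b) op" where
  "M0 = (\<lambda>p q. complex_of_real (1 / S^2) * (proj psi p q + DD p q))"

lemma finite_Ph: "finite (PiE {..<n} (\<lambda>_. GG))"
  by (rule finite_PiE) (auto simp: GG_def)

lemma card_Ph: "card (PiE {..<n} (\<lambda>_. GG)) = 4 ^ n"
  by (simp add: card_PiE card_GG)

lemma sep_M0: "separable M0"
proof -
  have eq: "M0 = (\<lambda>p q. \<Sum>\<phi>\<in>PiE {..<n} (\<lambda>_. GG). complex_of_real (1 / 4 ^ n) * tensor_op (proj (av \<phi>)) (proj (bv \<phi>)) p q)"
  proof (intro ext)
    fix p q :: "'a \<times> 'b"
    obtain x y where p: "p = (x, y)" by (cases p)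
    obtain x' y' where q: "q = (x', y')" by (cases q)
    show "M0 p q = (\<Sum>\<phi>\<in>PiE {..<n} (\<lambda>_. GG). complex_of_real (1 / 4 ^ n) * tensor_op (proj (av \<phi>)) (proj (bv \<phi>)) p q)"
      unfolding p q mixture M0_def ..
  qed
  show ?thesis unfolding eq
  proof (rule separable_finite[OF finite_Ph])
    show "\<forall>i\<in>PiE {..<n} (\<lambda>_. GG). 0 \<le> (1 / 4 ^ n :: real) \<and> density (proj (av i)) \<and> density (proj (bv i))"
    proof (intro ballI conjI)
      fix i assume i: "i \<in> PiE {..<n} (\<lambda>_. GG)"
      show "density (proj (av i))" by (rule density_proj, rule ip_av[OF i])
      show "density (proj (bv i))" by (rule density_proj, rule ip_bv[OF i])
    qed simp
    show "(\<Sum>i\<in>PiE {..<n} (\<lambda>_. GG). 1 / 4 ^ n :: real) = 1"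
      by (simp add: card_Ph)
  qed
qed

lemma sum_wD: "(\<Sum>jk\<in>{..<n}\<times>{..<n}. wD jk) = T"
  unfolding T_def wD_def sum.cartesian_product by (simp add: split_def)

lemma wD_nonneg: "jk \<in> {..<n}\<times>{..<n} \<Longrightarrow> 0 \<le> wD jk"
  unfolding wD_def using c_nonneg by auto

lemma DD_zero: "T = 0 \<Longrightarrow> DD = (\<lambda>p q. 0)"
proof -
  assume "T = 0"
  hence z: "\<And>jk. jk \<in> {..<n}\<times>{..<n} \<Longrightarrow> wD jk = 0"
    using sum_nonneg_eq_0_iff[of "{..<n}\<times>{..<n}" wD] wD_nonneg sum_wD by auto
  show ?thesis unfolding DD_def
  proof (intro ext sum.neutral ballI)
    fix p q jk assume "jk \<in> {..<n}\<times>{..<n}"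
    then show "complex_of_real (wD jk) * tensor_op (proj (e (fst jk))) (proj (f (snd jk))) p q = 0"
      using z by simp
  qed
qed

lemma ip_psi1: "ip psi psi = 1"
  using ip_psi_psi csq by (metis of_real_1 of_real_sum)

definition sigma0 :: "('a \<times> 'b) op" where
  "sigma0 = (if T > 0 then (\<lambda>p q. \<Sum>jk\<in>{..<n}\<times>{..<n}. complex_of_real (wD jk / T) * tensor_op (proj (e (fst jk))) (proj (f (snd jk))) p q) else proj psi)"

lemma DD_T: "T > 0 \<Longrightarrow> DD = (\<lambda>p q. complex_of_real T * sigma0 p q)"
  unfolding DD_def sigma0_def by (auto simp: fun_eq_iff sum_distrib_left)

lemma comb_M0: "(\<lambda>i j. complex_of_real (1 / (1 + T)) * proj psi i j + complex_of_real (T / (1 + T)) * sigma0 i j) = M0"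
proof (cases "T > 0")
  case True
  show ?thesis unfolding M0_def DD_T[OF True] S2
    using True by (auto simp: fun_eq_iff field_simps add_divide_distrib)
next
  case False
  hence T0: "T = 0" using T_nonneg by simp
  show ?thesis unfolding M0_def DD_zero[OF T0] S2 sigma0_def using T0 by simp
qed

lemma sigma0_pos: "T > 0 \<Longrightarrow> sigma0 = (\<lambda>p q. \<Sum>jk\<in>{..<n}\<times>{..<n}. complex_of_real (wD jk / T) * tensor_op (proj (e (fst jk))) (proj (f (snd jk))) p q)"
  unfolding sigma0_def by simp

lemma sep_sigma0: "separable sigma0"
proof (cases "T > 0")
  case True
  show ?thesis unfolding sigma0_pos[OF True]
  proof (rule separable_finite)
    show "\<forall>i\<in>{..<n} \<times> {..<n}. 0 \<le> wD i / T \<and> density (proj (e (fst i))) \<and> density (proj (f (snd i)))"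
      using True by (auto simp: wD_nonneg ipe ipf intro!: density_proj)
    show "(\<Sum>i\<in>{..<n} \<times> {..<n}. wD i / T) = 1"
      using True by (simp add: sum_divide_distrib[symmetric] sum_wD)
  qed simp
next
  case False
  hence "sigma0 = M0" using comb_M0 T_nonneg by (simp add: sigma0_def)
  then show ?thesis using sep_M0 by simp
qed

lemma density_sigma0: "density sigma0"
proof (cases "T > 0")
  case True
  have dj: "density (tensor_op (proj (e (fst jk))) (proj (f (snd jk))))" if jk: "jk \<in> {..<n}\<times>{..<n}" for jk
    unfolding tensor_proj by (rule density_proj) (use jk in \<open>auto simp: ip_uu ipe ipf\<close>)
  have psd: "psd sigma0" unfolding sigma0_pos[OF True]
    by (rule psd_comb) (use True dj in \<open>auto simp: wD_nonneg density_def\<close>)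
  have "trace sigma0 = (\<Sum>jk\<in>{..<n}\<times>{..<n}. complex_of_real (wD jk / T) * trace (tensor_op (proj (e (fst jk))) (proj (f (snd jk)))))"
    unfolding sigma0_pos[OF True] by (rule trace_comb)
  also have "\<dots> = (\<Sum>jk\<in>{..<n}\<times>{..<n}. complex_of_real (wD jk / T))"
  proof (intro sum.cong refl)
    fix jk assume jk: "jk \<in> {..<n}\<times>{..<n}"
    from dj[OF jk] show "complex_of_real (wD jk / T) * trace (tensor_op (proj (e (fst jk))) (proj (f (snd jk)))) = complex_of_real (wD jk / T)"
      by (simp add: density_def)
  qed
  also have "\<dots> = 1"
    using True by (simp add: sum_divide_distrib[symmetric] sum_wD flip: of_real_sum)
  finally show ?thesis using psd by (simp add: density_def)
next
  case False
  then show ?thesis unfolding sigma0_def by (simp add: density_proj ip_psi1)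
qed

end


theorem mainTheorem4:
  fixes \<psi> :: "('a::finite \<times> 'b::finite) \<Rightarrow> complex"
    and n :: nat and c :: "nat \<Rightarrow> real"
    and e :: "nat \<Rightarrow> 'a \<Rightarrow> complex" and f :: "nat \<Rightarrow> 'b \<Rightarrow> complex"
  assumes unit: "(\<Sum>i\<in>UNIV. cmod (\<psi> i) ^ 2) = 1"
    and e_on: "orthonormal_family n e"
    and f_on: "orthonormal_family n f"
    and c_nonneg: "\<forall>j<n. 0 \<le> c j"
    and schmidt: "\<psi> = (\<lambda>(a, b). \<Sum>j<n. complex_of_real (c j) * e j a * f j b)"
  shows "global_robustness (proj \<psi>) = ereal ((\<Sum>j<n. c j)^2 - 1)
       \<and> robustness (proj \<psi>) = ereal ((\<Sum>j<n. c j)^2 - 1)"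
proof -
  interpret schm e f n c using e_on f_on c_nonneg by unfold_locales
  have psi_eq: "\<psi> = psi"
    unfolding schmidt psi_def by (auto simp: fun_eq_iff mult.assoc)
  have "ip psi psi = (\<Sum>i\<in>UNIV. complex_of_real (cmod (\<psi> i) ^ 2))"
    unfolding ip_def psi_eq by (intro sum.cong refl) (simp add: bcb)
  also have "\<dots> = 1" using unit by (metis of_real_1 of_real_sum)
  finally have "complex_of_real (\<Sum>j<n. (c j)^2) = 1"
    using ip_psi_psi by (simp add: of_real_sum)
  hence csq: "(\<Sum>j<n. (c j)^2) = 1" by (metis of_real_eq_1_iff)
  interpret schm2 e f n c using csq by unfold_locales
  have Teq: "(\<Sum>j<n. c j)^2 - 1 = T" using S2 unfolding S_def by simp
  have low: "ereal T \<le> rel_robustness (proj psi) \<sigma>" if d: "density \<sigma>" for \<sigma>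
    unfolding rel_robustness_def
  proof (rule Inf_greatest)
    fix x assume "x \<in> {ereal t |t. 0 \<le> t \<and> separable (\<lambda>i j. complex_of_real (1 / (1 + t)) * proj psi i j
                       + complex_of_real (t / (1 + t)) * \<sigma> i j)}"
    then obtain t where x: "x = ereal t" and t0: "0 \<le> t"
      and sep: "separable (\<lambda>i j. complex_of_real (1 / (1 + t)) * proj psi i j + complex_of_real (t / (1 + t)) * \<sigma> i j)"
      by blast
    show "ereal T \<le> x" unfolding x using lower_bound[OF d t0 sep] by simp
  qed
  have up: "rel_robustness (proj psi) sigma0 \<le> ereal T"
    unfolding rel_robustness_def
    by (rule Inf_lower) (use T_nonneg comb_M0 sep_M0 in auto)
  have G: "global_robustness (proj psi) = ereal T"
    unfolding global_robustness_def
  proof (rule antisym)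
    show "Inf {rel_robustness (proj psi) \<sigma> |\<sigma>. density \<sigma>} \<le> ereal T"
      by (rule Inf_lower2[OF _ up]) (use density_sigma0 in auto)
    show "ereal T \<le> Inf {rel_robustness (proj psi) \<sigma> |\<sigma>. density \<sigma>}"
      by (rule Inf_greatest) (auto intro: low)
  qed
  have R: "robustness (proj psi) = ereal T"
    unfolding robustness_def
  proof (rule antisym)
    show "Inf {rel_robustness (proj psi) \<sigma> |\<sigma>. density \<sigma> \<and> separable \<sigma>} \<le> ereal T"
      by (rule Inf_lower2[OF _ up]) (use density_sigma0 sep_sigma0 in auto)
    show "ereal T \<le> Inf {rel_robustness (proj psi) \<sigma> |\<sigma>. density \<sigma> \<and> separable \<sigma>}"
      by (rule Inf_greatest) (auto intro: low)
  qed
  show ?thesis unfolding Teq psi_eq using G R by simp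
qed


end
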